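(* For every integer $k \geq 2$, the Nyldon factorization of the Fibonacci word $F_k$ is the two-term sequence $a,\ F_k[2..f_k]$. That is, $F_k = a\cdot F_k[2..f_k]$, both $a$ and $F_k[2..f_k]$ are Nyldon words, and $a \preceq F_k[2..f_k]$.
   Context: Strings are over the binary alphabet $\{a,b\}$ ordered by $a \prec b$, and $\prec$ also denotes the induced lexicographic order on strings: $x \prec y$ iff $x$ is a proper prefix of $y$, or there is $i$ with $x[1..i-1]=y[1..i-1]$ and $x[i]\prec y[i]$; $x\preceq y$ means $x\prec y$ or $x=y$. For a string $w$, $w[i..j]$ denotes the substring from position $i$ to position $j$ (1-indexed). Nyldon words are defined recursively: every string of length $1$ is a Nyldon word; a string $w$ with $|w|\ge 2$ is a Nyldon word iff there is no factorization $w=\gamma_1\cdots\gamma_m$ with $m\ge 2$, each $\gamma_i$ a nonempty Nyldon word, and $\gamma_1\preceq\gamma_2\preceq\cdots\preceq\gamma_m$. Every nonempty string $w$ has a unique factorization $w=\gamma_1\cdots\gamma_m$ into Nyldon words with $\gamma_i\preceq\gamma_{i+1}$ for all $i$; it is called the Nyldon factorization of $w$. Fibonacci words: $F_0=b$, $F_1=a$, $F_k=F_{k-1}F_{k-2}$ for $k\ge 2$; $f_k=|F_k|$. *)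

theory Defs
  imports Main
begin

datatype letter = A | B

definition letter_less :: "letter \<Rightarrow> letter \<Rightarrow> bool" where
  "letter_less x y \<longleftrightarrow> x = A \<and> y = B"

fun lex_less :: "letter list \<Rightarrow> letter list \<Rightarrow> bool" where
  "lex_less [] [] = False"
| "lex_less [] (y # ys) = True"
| "lex_less (x # xs) [] = False"
| "lex_less (x # xs) (y # ys) = (letter_less x y \<or> (x = y \<and> lex_less xs ys))"

definition lex_le :: "letter list \<Rightarrow> letter list \<Rightarrow> bool" where
  "lex_le x y \<longleftrightarrow> lex_less x y \<or> x = y"

text \<open>nyl n w: w is a Nyldon word of length at most n (recursion on the length bound).\<close>
fun nyl :: "nat \<Rightarrow> letter list \<Rightarrow> bool" where
  "nyl 0 w = False"
| "nyl (Suc n) w =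
     (w \<noteq> [] \<and> length w \<le> Suc n \<and>
      (length w = 1 \<or>
       \<not> (\<exists>gs. length gs \<ge> 2 \<and> concat gs = w \<and>
              (\<forall>g\<in>set gs. g \<noteq> [] \<and> nyl n g) \<and> successively lex_le gs)))"

definition nyldon :: "letter list \<Rightarrow> bool" where
  "nyldon w \<longleftrightarrow> nyl (length w) w"

fun fib_word :: "nat \<Rightarrow> letter list" where
  "fib_word 0 = [B]"
| "fib_word (Suc 0) = [A]"
| "fib_word (Suc (Suc k)) = fib_word (Suc k) @ fib_word k"

end

theory Submission
  imports Defs
begin

lemma lt_irrefl[simp]: "\<not> lex_less x x"
  by (induction x) (auto simp: letter_less_def)

lemma lt_trans: "lex_less x y \<Longrightarrow> lex_less y z \<Longrightarrow> lex_less x z"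
proof (induction x arbitrary: y z)
  case Nil then show ?case by (cases z) (cases y, auto)+
next
  case (Cons a x)
  then show ?case
    by (cases y; cases z) (auto simp: letter_less_def)
qed

lemma lt_total: "x \<noteq> y \<Longrightarrow> lex_less x y \<or> lex_less y x"
proof (induction x arbitrary: y)
  case Nil then show ?case by (cases y) auto
next
  case (Cons a x)
  then show ?case
    by (cases y) (auto simp: letter_less_def intro: letter.exhaust, (metis letter.exhaust)+)
qed

lemma lt_asym: "lex_less x y \<Longrightarrow> \<not> lex_less y x"
  using lt_trans lt_irrefl by blast

lemma lt_app: "y \<noteq> [] \<Longrightarrow> lex_less x (x @ y)"
  by (induction x) (cases y, auto)+

lemma le_app: "lex_le x (x @ y)"
  using lt_app unfolding lex_le_def by (cases "y = []") auto

lemma le_trans: "lex_le x y \<Longrightarrow> lex_le y z \<Longrightarrow> lex_le x z"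
  unfolding lex_le_def using lt_trans by blast

lemma lt_le_trans: "lex_less x y \<Longrightarrow> lex_le y z \<Longrightarrow> lex_less x z"
  unfolding lex_le_def using lt_trans by blast

lemma not_le: "\<not> lex_le x y \<Longrightarrow> lex_less y x"
  unfolding lex_le_def using lt_total by blast

lemma le_lt_False: "lex_le x y \<Longrightarrow> lex_less y x \<Longrightarrow> False"
  unfolding lex_le_def using lt_asym by auto


lemma len_concat: "h \<in> set zs \<Longrightarrow> length h \<le> length (concat zs)"
  by (induction zs) auto

lemma nyl_indep: "length w \<le> m \<Longrightarrow> length w \<le> n \<Longrightarrow> nyl m w = nyl n w"
proof (induction m arbitrary: w n)
  case 0
  then show ?case by (cases n) auto
next
  case (Suc m)
  show ?case
  proof (cases n)
    case 0 then show ?thesis using Suc by auto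
  next
    case (Suc n')
    have key: "(\<forall>g\<in>set gs. g \<noteq> [] \<and> nyl m g) = (\<forall>g\<in>set gs. g \<noteq> [] \<and> nyl n' g)"
      if "length gs \<ge> 2" "concat gs = w" for gs
    proof -
      have "length g \<le> m \<and> length g \<le> n'" if "g \<in> set gs" "\<forall>h\<in>set gs. h \<noteq> []" for g
      proof -
        obtain xs ys where gs: "gs = xs @ g # ys" using \<open>g \<in> set gs\<close> by (meson split_list)
        have "xs @ ys \<noteq> []" using \<open>length gs \<ge> 2\<close> gs by auto
        then obtain h where "h \<in> set (xs @ ys)" by (metis last_in_set)
        then have "h \<noteq> []" "h \<in> set gs" using that gs by auto
        have "length w = length (concat xs) + length g + length (concat ys)"
          using \<open>concat gs = w\<close> gs by auto
        moreover have "length h \<le> length (concat xs) + length (concat ys)"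
          using len_concat[OF \<open>h \<in> set (xs @ ys)\<close>] by simp
        ultimately show ?thesis using \<open>h \<noteq> []\<close> Suc.prems \<open>n = Suc n'\<close>
          by (cases h) auto
      qed
      then show ?thesis using Suc.IH by blast
    qed
    show ?thesis using Suc.prems \<open>n = Suc n'\<close> key
      by (simp only: nyl.simps) (metis (no_types, lifting))
  qed
qed

lemma nyl_len: "nyl n w \<Longrightarrow> length w \<le> n"
  by (cases n) auto

definition fac :: "letter list list \<Rightarrow> bool" where
  "fac gs \<longleftrightarrow> (\<forall>g\<in>set gs. nyldon g) \<and> successively lex_le gs"

lemma nyldon_ne: "nyldon w \<Longrightarrow> w \<noteq> []"
  unfolding nyldon_def by (cases w) auto

lemma nyldon_iff: "nyldon w \<longleftrightarrow> w \<noteq> [] \<and> (length w = 1 \<or>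
   \<not> (\<exists>gs. length gs \<ge> 2 \<and> concat gs = w \<and> fac gs))"
proof (cases w)
  case Nil then show ?thesis using nyldon_ne by auto
next
  case (Cons x xs)
  have eq: "(\<forall>g\<in>set gs. g \<noteq> [] \<and> nyl (length xs) g) = (\<forall>g\<in>set gs. nyldon g)"
    if "length gs \<ge> 2" "concat gs = w" for gs
  proof -
    have "length g \<le> length xs" if "g \<in> set gs" "\<forall>h\<in>set gs. h \<noteq> [] \<and> nyl (length xs) h" for g
      using that nyl_len by blast
    moreover have "length g \<le> length xs" if "g \<in> set gs" "\<forall>h\<in>set gs. nyldon h" for g
    proof -
      obtain as bs where gs: "gs = as @ g # bs" using \<open>g \<in> set gs\<close> by (meson split_list)
      have "as @ bs \<noteq> []" using \<open>length gs \<ge> 2\<close> gs by auto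
      then obtain h where h: "h \<in> set (as @ bs)" by (metis last_in_set)
      then have "h \<noteq> []" using that gs nyldon_ne by auto
      have "length w = length (concat as) + length g + length (concat bs)"
        using \<open>concat gs = w\<close> gs by auto
      moreover have "length h \<le> length (concat as) + length (concat bs)"
        using len_concat[OF h] by simp
      ultimately show ?thesis using \<open>h \<noteq> []\<close> Cons by (cases h) auto
    qed
    ultimately show ?thesis unfolding nyldon_def using nyldon_ne nyl_indep
      by (metis (no_types, lifting) le_refl nyldon_def)
  qed
  have "nyldon w = nyl (Suc (length xs)) w" unfolding nyldon_def using Cons by simp
  also have "\<dots> = (w \<noteq> [] \<and> (length w = 1 \<or>
   \<not> (\<exists>gs. length gs \<ge> 2 \<and> concat gs = w \<and> (\<forall>g\<in>set gs. g \<noteq> [] \<and> nyl (length xs) g) \<and> successively lex_le gs)))"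
    using Cons by simp
  also have "\<dots> = (w \<noteq> [] \<and> (length w = 1 \<or>
   \<not> (\<exists>gs. length gs \<ge> 2 \<and> concat gs = w \<and> fac gs)))"
    unfolding fac_def using eq by (metis (no_types, lifting))
  finally show ?thesis .
qed

lemma nyl_nofac: "nyldon w \<Longrightarrow> length gs \<ge> 2 \<Longrightarrow> concat gs = w \<Longrightarrow> fac gs \<Longrightarrow> False"
proof -
  assume a: "nyldon w" "length gs \<ge> 2" "concat gs = w" "fac gs"
  then have "length w \<noteq> 1"
  proof -
    obtain g h r where "gs = g # h # r" using a(2)
      by (metis One_nat_def Suc_1 Suc_le_length_iff)
    then have "length w \<ge> length g + length h" using a(3) by auto
    moreover have "g \<noteq> []" "h \<noteq> []" using a(4) \<open>gs = g # h # r\<close> nyldon_ne unfolding fac_def by auto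
    ultimately show ?thesis by (cases g; cases h) auto
  qed
  then show False using a nyldon_iff by blast
qed

lemma EX: "w \<noteq> [] \<Longrightarrow> \<exists>gs. gs \<noteq> [] \<and> concat gs = w \<and> fac gs"
proof (cases "nyldon w")
  case True
  then show ?thesis by (intro exI[of _ "[w]"]) (auto simp: fac_def)
next
  case False
  assume "w \<noteq> []"
  then obtain gs where "length gs \<ge> 2" "concat gs = w" "fac gs"
    using False nyldon_iff by blast
  then show ?thesis by (intro exI[of _ gs]) auto
qed

lemma fac_append: "fac xs \<Longrightarrow> fac ys \<Longrightarrow> xs \<noteq> [] \<Longrightarrow> ys \<noteq> [] \<Longrightarrow> lex_le (last xs) (hd ys) \<Longrightarrow> fac (xs @ ys)"
  unfolding fac_def by (auto simp: successively_append_iff)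

lemma fac_single: "nyldon g \<Longrightarrow> fac [g]"
  unfolding fac_def by auto

lemma fac_Cons: "fac (g # gs) \<Longrightarrow> fac gs"
  unfolding fac_def by (auto simp: successively_Cons)

lemma fac_butlast: "fac gs \<Longrightarrow> fac (butlast gs)"
  unfolding fac_def
  by (metis append_butlast_last_id butlast.simps(1) in_set_butlastD successively_append_iff)

lemma fac_nyl: "fac gs \<Longrightarrow> g \<in> set gs \<Longrightarrow> nyldon g"
  unfolding fac_def by auto

lemma suf_split: "p @ s = q @ t \<Longrightarrow> length s \<le> length t \<Longrightarrow> \<exists>r. t = r @ s \<and> p = q @ r"
  by (auto simp: append_eq_append_conv2)

definition Aprop :: "letter list \<Rightarrow> bool" where
  "Aprop g \<longleftrightarrow> (\<forall>p s. nyldon g \<longrightarrow> g = p @ s \<longrightarrow> p \<noteq> [] \<longrightarrow> nyldon s \<longrightarrow> lex_less s g)"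

lemma concat_last: "gs \<noteq> [] \<Longrightarrow> concat gs = concat (butlast gs) @ last gs"
  by (metis append_butlast_last_id concat_append concat.simps append_Nil2 concat.simps(1))

lemma B_gen:
  assumes "\<forall>g\<in>set gs. Aprop g" "fac gs" "gs \<noteq> []" "concat gs = p @ s" "nyldon s"
  shows "length s \<le> length (last gs)"
  using assms
proof (induction gs arbitrary: p)
  case Nil then show ?case by simp
next
  case (Cons g gs')
  show ?case
  proof (cases "gs' = []")
    case True
    then show ?thesis using Cons.prems by auto
  next
    case False
    define c where "c = concat gs'"
    have eq: "g @ c = p @ s" using Cons.prems c_def by simp
    show ?thesis
    proof (cases "length s \<le> length c")
      case True
      then obtain r where "c = r @ s" using suf_split[OF eq[symmetric]] by blast
      then have "length s \<le> length (last gs')"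
        using Cons.IH[of r] Cons.prems False fac_Cons c_def by auto
      then show ?thesis using False by simp
    next
      case False2: False
      then obtain s' where s': "s = s' @ c" "g = p @ s'"
        using suf_split[OF eq] by fastforce
      have "s' \<noteq> []" using s' False2 by auto
      have hd: "lex_le g (hd gs')"
        using Cons.prems(2) False unfolding fac_def by (cases gs') auto
      have fgs': "fac gs'" using Cons.prems(2) fac_Cons by blast
      show ?thesis
      proof (cases "p = []")
        case True
        then have "concat (g # gs') = s" using s' c_def by simp
        then show ?thesis using nyl_nofac[OF Cons.prems(5), of "g # gs'"] Cons.prems(2) False
          by (cases gs') auto
      next
        case pne: False
        obtain ds where ds: "ds \<noteq> []" "concat ds = s'" "fac ds" using EX[OF \<open>s' \<noteq> []\<close>] by blast
        have "g = (p @ concat (butlast ds)) @ last ds"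
          using s' ds concat_last[OF ds(1)] by simp
        moreover have "nyldon (last ds)" using ds fac_nyl by auto
        moreover have "nyldon g" using Cons.prems(2) fac_nyl by auto
        ultimately have "lex_less (last ds) g" using Cons.prems(1) pne unfolding Aprop_def
          by (metis Nil_is_append_conv list.set_intros(1))
        then have "lex_le (last ds) (hd gs')" using hd lt_le_trans lex_le_def by blast
        then have "fac (ds @ gs')" using fac_append ds fgs' False by blast
        moreover have "concat (ds @ gs') = s" using ds s' c_def by simp
        moreover have "length (ds @ gs') \<ge> 2" using ds False by (cases ds; cases gs') auto
        ultimately show ?thesis using nyl_nofac Cons.prems(5) by blast
      qed
    qed
  qed
qed

lemma fac_ne: "fac gs \<Longrightarrow> g \<in> set gs \<Longrightarrow> g \<noteq> []"
  using fac_nyl nyldon_ne by blast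

lemma concat_ne: "fac gs \<Longrightarrow> gs \<noteq> [] \<Longrightarrow> concat gs \<noteq> []"
  using fac_ne by (cases gs) auto

lemma fac_last_le: "fac (xs @ [y]) \<Longrightarrow> xs \<noteq> [] \<Longrightarrow> lex_le (last xs) y"
  unfolding fac_def by (auto simp: successively_append_iff)

lemma A_all: "Aprop g"
proof (induction "length g" arbitrary: g rule: less_induct)
  case less
  note OIH = less
  have IHB: "length s \<le> length (last gs)"
    if "\<forall>h\<in>set gs. length h < length g" "fac gs" "gs \<noteq> []" "concat gs = p @ s" "nyldon s" for gs p s
    using B_gen that OIH by blast
  have main: "lex_less s g" if "nyldon g" "g = p @ s" "p \<noteq> []" "nyldon s" for p s
    using that
  proof (induction "length p" arbitrary: p s rule: less_induct)
    case (less p s)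
    obtain ps where ps: "ps \<noteq> []" "concat ps = p" "fac ps" using EX[OF less.prems(3)] by blast
    define pr where "pr = last ps"
    have "\<not> lex_le pr s"
    proof
      assume "lex_le pr s"
      then have "fac (ps @ [s])" using fac_append[OF ps(3) fac_single[OF less.prems(4)]] ps pr_def by auto
      moreover have "concat (ps @ [s]) = g" using ps less.prems by simp
      moreover have "length (ps @ [s]) \<ge> 2" using ps by (cases ps) auto
      ultimately show False using nyl_nofac less.prems(1) by blast
    qed
    then have lt1: "lex_less s pr" using not_le by blast
    have sne: "s \<noteq> []" using less.prems nyldon_ne by auto
    show ?case
    proof (cases "butlast ps = []")
      case True
      then have "ps = [pr]" using ps pr_def by (metis append_butlast_last_id append_Nil)
      then have "p = pr" using ps by simp
      then have "lex_less pr g" using less.prems lt_app sne by simp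
      then show ?thesis using lt1 lt_trans by blast
    next
      case False
      define ps' where "ps' = butlast ps"
      define q where "q = pr @ s"
      have psdec: "ps = ps' @ [pr]" using ps ps'_def pr_def by simp
      have gq: "g = concat ps' @ q" using less.prems psdec ps q_def by simp
      have fps': "fac ps'" using fac_butlast ps ps'_def by blast
      have cps'ne: "concat ps' \<noteq> []" using concat_ne fps' False ps'_def by blast
      have nq: "\<not> nyldon q"
      proof
        assume nyq: "nyldon q"
        have "lex_le (last ps') pr" using fac_last_le ps(3) psdec False ps'_def by metis
        then have "lex_le (last ps') q" using le_trans le_app q_def by blast
        then have "fac (ps' @ [q])" using fac_append[OF fps' fac_single[OF nyq]] False ps'_def by auto
        moreover have "ps' \<noteq> []" using False ps'_def by simp
        then have "length (ps' @ [q]) \<ge> 2" by (cases ps') auto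
        ultimately show False using nyl_nofac less.prems(1) gq by fastforce
      qed
      have qne: "q \<noteq> []" using q_def sne by simp
      obtain cs where cs: "cs \<noteq> []" "concat cs = q" "fac cs" using EX[OF qne] by blast
      have bcs: "butlast cs \<noteq> []"
      proof
        assume "butlast cs = []"
        then have "cs = [last cs]" using append_butlast_last_id[OF cs(1)] by simp
        then have "cs = [q]" using cs(2) by (metis concat.simps append_Nil2)
        then show False using nq cs fac_nyl by auto
      qed
      have lq: "length q < length g" using gq cps'ne by simp
      have "\<forall>h\<in>set cs. length h < length g" using cs(2) lq len_concat le_less_trans by blast
      then have "length s \<le> length (last cs)"
        using IHB[of cs pr s] cs q_def less.prems(4) by blast
      define c where "c = last cs"
      have qc: "q = concat (butlast cs) @ c" using concat_last cs c_def by metis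
      have nyc: "nyldon c" using cs c_def fac_nyl by auto
      obtain t where t: "c = t @ s" "pr = concat (butlast cs) @ t"
        using suf_split[of pr s "concat (butlast cs)" c] qc q_def \<open>length s \<le> length (last cs)\<close> c_def
        by auto
      show ?thesis
      proof (cases "t = []")
        case True
        then have pr_eq: "pr = concat (butlast cs)" using t by simp
        have fbc: "fac (butlast cs)" using fac_butlast cs by blast
        have nypr: "nyldon pr" using ps pr_def fac_nyl by auto
        show ?thesis
        proof (cases "length (butlast cs) \<ge> 2")
          case True
          then show ?thesis using nyl_nofac[OF nypr True] pr_eq fbc by simp
        next
          case False
          then obtain b1 where "butlast cs = [b1]" using bcs
            by (cases "butlast cs") (auto simp: Suc_le_eq)
          then have "cs = [b1, c]" using append_butlast_last_id[OF cs(1)] c_def by simp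
          moreover have "b1 = pr" using pr_eq \<open>butlast cs = [b1]\<close> by simp
          moreover have "lex_le b1 c" using cs(3) \<open>cs = [b1, c]\<close> unfolding fac_def by simp
          ultimately have "lex_le pr s" using True t by simp
          then show ?thesis using \<open>\<not> lex_le pr s\<close> by blast
        qed
      next
        case tne: False
        have lc: "length c < length g" using qc lq by simp
        have "Aprop c" using OIH lc by blast
        then have lsc: "lex_less s c" using nyc t tne less.prems(4) unfolding Aprop_def by blast
        define p' where "p' = concat ps' @ concat (butlast cs)"
        have gp': "g = p' @ c" using gq qc p'_def by simp
        have "length p' < length p"
          using gp' less.prems(2) t tne by (cases t) auto
        moreover have "p' \<noteq> []" using cps'ne p'_def by simp
        ultimately have "lex_less c g" using less.hyps less.prems(1) gp' nyc by blast
        then show ?thesis using lsc lt_trans by blast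
      qed
    qed
  qed
  show ?case unfolding Aprop_def using main by blast
qed

lemma A: "nyldon g \<Longrightarrow> g = p @ s \<Longrightarrow> p \<noteq> [] \<Longrightarrow> nyldon s \<Longrightarrow> lex_less s g"
  using A_all unfolding Aprop_def by blast

lemma B: "fac gs \<Longrightarrow> gs \<noteq> [] \<Longrightarrow> concat gs = p @ s \<Longrightarrow> nyldon s \<Longrightarrow> length s \<le> length (last gs)"
  using B_gen A_all by blast

definition SB :: "letter list \<Rightarrow> letter list \<Rightarrow> bool" where
  "SB p v \<longleftrightarrow> (\<forall>q \<delta>. p = q @ \<delta> \<longrightarrow> q \<noteq> [] \<longrightarrow> nyldon \<delta> \<longrightarrow> lex_le \<delta> v)"

lemma long_not:
  assumes "nyldon v" "SB p v" "p @ v = q @ \<delta>" "q \<noteq> []" "length \<delta> > length v"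
  shows "\<not> nyldon \<delta>"
proof
  assume nd: "nyldon \<delta>"
  obtain t where t: "\<delta> = t @ v" "p = q @ t" using suf_split[OF assms(3)] assms(5) by fastforce
  have "t \<noteq> []" using t assms(5) by auto
  obtain ds where ds: "ds \<noteq> []" "concat ds = t" "fac ds" using EX[OF \<open>t \<noteq> []\<close>] by blast
  have "p = (q @ concat (butlast ds)) @ last ds" using t ds concat_last[OF ds(1)] by simp
  moreover have "nyldon (last ds)" using ds fac_nyl by auto
  ultimately have "lex_le (last ds) v" using assms(2,4) unfolding SB_def by blast
  then have "fac (ds @ [v])" using fac_append[OF ds(3) fac_single[OF assms(1)]] ds by auto
  moreover have "concat (ds @ [v]) = \<delta>" using ds t by simp
  moreover have "length (ds @ [v]) \<ge> 2" using ds by (cases ds) auto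
  ultimately show False using nyl_nofac nd by blast
qed

lemma STEP2:
  assumes "nyldon p" "nyldon v" "SB p v"
  shows "SB (p @ v) v"
  unfolding SB_def
proof (intro allI impI)
  fix q \<delta> assume h: "p @ v = q @ \<delta>" "q \<noteq> []" "nyldon \<delta>"
  show "lex_le \<delta> v"
  proof (cases "length \<delta> \<le> length v")
    case True
    then obtain r where r: "v = r @ \<delta>" using suf_split[OF h(1)[symmetric]] by blast
    show ?thesis
    proof (cases "r = []")
      case True then show ?thesis using r lex_le_def by simp
    next
      case False then show ?thesis using A[OF assms(2) r False h(3)] lex_le_def by blast
    qed
  next
    case False
    then show ?thesis using long_not[OF assms(2,3) h(1,2)] h(3) by simp
  qed
qed

lemma STEP1:
  assumes "nyldon p" "nyldon v" "lex_less v p" "SB p v"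
  shows "nyldon (p @ v)"
proof -
  have "\<not> (\<exists>gs. length gs \<ge> 2 \<and> concat gs = p @ v \<and> fac gs)"
  proof
    assume "\<exists>gs. length gs \<ge> 2 \<and> concat gs = p @ v \<and> fac gs"
    then obtain gs where gs: "length gs \<ge> 2" "concat gs = p @ v" "fac gs" by blast
    have gne: "gs \<noteq> []" using gs by auto
    define \<gamma> where "\<gamma> = last gs"
    define gs' where "gs' = butlast gs"
    have gsd: "gs = gs' @ [\<gamma>]" using gne gs'_def \<gamma>_def by simp
    have gs'ne: "gs' \<noteq> []" using gs gsd by auto
    have fgs': "fac gs'" using fac_butlast gs gs'_def by blast
    have nyg: "nyldon \<gamma>" using gs \<gamma>_def gne fac_nyl by auto
    have eq: "p @ v = concat gs' @ \<gamma>" using gs gsd by simp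
    have cne: "concat gs' \<noteq> []" using concat_ne fgs' gs'ne by blast
    have "length v \<le> length \<gamma>" using B[OF gs(3) gne, of p v] gs assms(2) \<gamma>_def by simp
    moreover have "\<not> length \<gamma> > length v" using long_not[OF assms(2,4) eq cne] nyg by blast
    ultimately have "length \<gamma> = length v" by simp
    then obtain r where "\<gamma> = r @ v" "concat gs' = p @ r" using suf_split[OF eq[symmetric]] by fastforce
    then have gv: "\<gamma> = v" "concat gs' = p" using \<open>length \<gamma> = length v\<close> by auto
    show False
    proof (cases "length gs' \<ge> 2")
      case True then show False using nyl_nofac[OF assms(1) True gv(2) fgs'] by blast
    next
      case False
      then obtain g1 where "gs' = [g1]" using gs'ne by (cases gs') (auto simp: Suc_le_eq)
      then have "gs = [p, v]" using gsd gv by simp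
      then have "lex_le p v" using gs(3) unfolding fac_def by simp
      then show False using assms(3) le_lt_False by blast
    qed
  qed
  moreover have "p @ v \<noteq> []" using assms nyldon_ne by simp
  ultimately show ?thesis using nyldon_iff by blast
qed

definition U :: "nat \<Rightarrow> letter list" where "U k = drop 1 (fib_word k)"
definition X :: "nat \<Rightarrow> letter list" where "X k = U (Suc k) @ [A]"

lemma fibA0: "\<exists>xs. fib_word (Suc k) = A # xs"
proof (induction k)
  case 0 then show ?case by simp
next
  case (Suc k)
  have "fib_word (Suc (Suc k)) = fib_word (Suc k) @ fib_word k" by simp
  then show ?case using Suc by auto
qed

lemma fibA: "fib_word (Suc k) = A # U (Suc k)"
  using fibA0[of k] unfolding U_def by auto

lemma Urec: "U (Suc (Suc (Suc k))) = U (Suc (Suc k)) @ A # U (Suc k)"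
proof -
  have "fib_word (Suc (Suc (Suc k))) = fib_word (Suc (Suc k)) @ fib_word (Suc k)" by simp
  then have "A # U (Suc (Suc (Suc k))) = (A # U (Suc (Suc k))) @ (A # U (Suc k))"
    using fibA by metis
  then show ?thesis by simp
qed

lemma Xrec: "X (Suc (Suc n)) = X (Suc n) @ X n"
  unfolding X_def using Urec[of n] by simp

lemma UX: "U (Suc (Suc (Suc k))) = X (Suc k) @ U (Suc k)"
  unfolding X_def using Urec[of k] by simp

lemma U2: "U 2 = [B]" by (simp add: U_def numeral_2_eq_2)
lemma U3: "U 3 = [B, A]" by (simp add: U_def numeral_3_eq_3)
lemma X0: "X 0 = [A]" by (simp add: X_def U_def)
lemma X1: "X 1 = [B, A]" using U2 by (simp add: X_def numeral_2_eq_2)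

lemma X_ne: "X n \<noteq> []" by (simp add: X_def)

lemma X_lt: "lex_less (X n) (X (Suc n))"
proof (cases n)
  case 0 then show ?thesis using X0 X1 by (simp add: letter_less_def)
next
  case (Suc m) then show ?thesis using Xrec[of m] X_ne lt_app by simp
qed

lemma SB_mono: "SB p v \<Longrightarrow> lex_le v w \<Longrightarrow> SB p w"
  unfolding SB_def using le_trans by blast

lemma nyl1: "nyldon [x]" using nyldon_iff by simp

lemma SB_single: "SB [x] v"
  unfolding SB_def using nyldon_ne by (auto simp: Cons_eq_append_conv)

lemma I0: "nyldon (X 1) \<and> nyldon (X 2) \<and> SB (X 2) (X 0)"
proof -
  have lt: "lex_less [A] [B]" by (simp add: letter_less_def)
  have n1: "nyldon ([B] @ [A])" using STEP1[OF nyl1 nyl1 lt SB_single] .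
  have s1: "SB ([B] @ [A]) [A]" using STEP2[OF nyl1 nyl1 SB_single] .
  have x1: "nyldon (X 1)" "SB (X 1) (X 0)" using n1 s1 X1 X0 by auto
  have x2: "X 2 = X 1 @ X 0" using Xrec[of 0] by (simp add: numeral_2_eq_2)
  have x0: "nyldon (X 0)" using X0 nyl1 by simp
  have lt01: "lex_less (X 0) (X 1)" using X0 X1 by (simp add: letter_less_def)
  have "nyldon (X 2)" using STEP1[OF x1(1) x0 lt01 x1(2)] x2 by simp
  moreover have "SB (X 2) (X 0)" using STEP2[OF x1(1) x0 x1(2)] x2 by simp
  ultimately show ?thesis using x1 by simp
qed

lemma In: "nyldon (X (Suc n)) \<and> nyldon (X (Suc (Suc n))) \<and> SB (X (Suc (Suc n))) (X n)"
proof (induction n)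
  case 0 then show ?case using I0 by (simp add: numeral_2_eq_2)
next
  case (Suc n)
  have sb: "SB (X (Suc (Suc n))) (X (Suc n))"
    using SB_mono Suc X_lt lex_le_def by blast
  have e: "X (Suc (Suc (Suc n))) = X (Suc (Suc n)) @ X (Suc n)" using Xrec by simp
  have "nyldon (X (Suc (Suc (Suc n))))"
    using STEP1[of "X (Suc (Suc n))" "X (Suc n)"] Suc sb X_lt e by simp
  moreover have "SB (X (Suc (Suc (Suc n)))) (X (Suc n))"
    using STEP2[of "X (Suc (Suc n))" "X (Suc n)"] Suc sb e by simp
  ultimately show ?case using Suc by simp
qed

lemma X_nyl: "nyldon (X n)"
  using In X0 nyl1 by (cases n) auto

lemma XU_le: "lex_le (X k) (U (Suc (Suc k)))"
proof (cases k)
  case 0 then show ?thesis using X0 U2 by (simp add: lex_le_def letter_less_def numeral_2_eq_2)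
next
  case (Suc m) then show ?thesis using UX[of m] le_app by simp
qed

lemma UX_lt: "lex_less (U (Suc (Suc k))) (X (Suc (Suc k)))"
  unfolding X_def using lt_app Urec[of k] by simp

lemma Jn: "nyldon (U (Suc (Suc k))) \<and> nyldon (U (Suc (Suc (Suc k))))"
proof (induction k)
  case 0 then show ?case using U2 U3 I0 X1 nyl1 by (simp add: numeral_2_eq_2 numeral_3_eq_3)
next
  case (Suc k)
  have e: "U (Suc (Suc (Suc (Suc k)))) = X (Suc (Suc k)) @ U (Suc (Suc k))" using UX by simp
  have sb: "SB (X (Suc (Suc k))) (U (Suc (Suc k)))" using In[of k] XU_le SB_mono by blast
  have "nyldon (U (Suc (Suc (Suc (Suc k)))))"
    using STEP1[OF X_nyl _ UX_lt sb] Suc e by simp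
  then show ?case using Suc by simp
qed

lemma U_B: "\<exists>xs. U (Suc (Suc k)) = B # xs"
proof (induction k)
  case 0 then show ?case using U2 by (simp add: numeral_2_eq_2)
next
  case (Suc k) then show ?case using Urec[of k] by auto
qed

theorem theorem1:
  fixes k :: nat
  assumes "k \<ge> 2"
  shows "fib_word k = [A] @ drop 1 (fib_word k) \<and> nyldon [A] \<and>
         nyldon (drop 1 (fib_word k)) \<and> lex_le [A] (drop 1 (fib_word k))"
proof -
  obtain m where m: "k = Suc (Suc m)" using assms by (metis add_2_eq_Suc le_Suc_ex)
  have "fib_word k = [A] @ drop 1 (fib_word k)" using fibA[of "Suc m"] m by (simp add: U_def)
  moreover have "nyldon (drop 1 (fib_word k))" using Jn[of m] m by (simp add: U_def)
  moreover have "lex_le [A] (drop 1 (fib_word k))"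
    using U_B[of m] m by (auto simp: U_def lex_le_def letter_less_def)
  ultimately show ?thesis using nyl1 by simp
qed
end
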